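(* Let $f(t)\in\mathbb{F}_2[t]$ be an irreducible polynomial with $f(t)\neq t$ that is not self-reciprocal, and let $R_f=\mathbb{F}_2[t,t^{-1},f(t)^{-1}]$. Then the only ring automorphism of $R_f$ is the identity.
   Context: The reciprocal of a polynomial $f(t)$ of degree $m$ is $t^m f(1/t)$; $f$ is self-reciprocal if it equals its reciprocal. *)

theory Defs
  imports "HOL-Library.Z2" "HOL-Computational_Algebra.Polynomial" "HOL-Computational_Algebra.Fraction_Field"
    "HOL-Computational_Algebra.Polynomial_Factorial"
begin

(* F_2 is the type bit (HOL-Library.Z2).  The reciprocal t^m f(1/t) of f
   (m = degree f) is the library's reflect_poly f = Poly (rev (coeffs f)). *)
definition self_reciprocal :: "bit poly \<Rightarrow> bool" where
  "self_reciprocal f \<longleftrightarrow> reflect_poly f = f"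

(* R_f = F_2[t, t^-1, f^-1], realised as a subring of the fraction field
   F_2(t) = bit poly fract: all p / (t^a f^b). *)
definition R_f :: "bit poly \<Rightarrow> bit poly fract set" where
  "R_f f = {Fract p ([:0, 1:] ^ a * f ^ b) | p a b. True}"

definition ring_automorphism :: "bit poly fract set \<Rightarrow> (bit poly fract \<Rightarrow> bit poly fract) \<Rightarrow> bool" where
  "ring_automorphism S \<phi> \<longleftrightarrow> bij_betw \<phi> S S \<and>
     (\<forall>x\<in>S. \<forall>y\<in>S. \<phi> (x + y) = \<phi> x + \<phi> y \<and> \<phi> (x * y) = \<phi> x * \<phi> y) \<and> \<phi> 1 = 1"

end

theory Submission
  imports Defs
begin


instantiation bit ::
  "{unique_euclidean_ring, normalization_euclidean_semiring, normalization_semidom_multiplicative}"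
begin

definition normalize_bit :: "bit \<Rightarrow> bit" where [simp]: "normalize_bit x = x"
definition unit_factor_bit :: "bit \<Rightarrow> bit" where [simp]: "unit_factor_bit x = x"
definition euclidean_size_bit :: "bit \<Rightarrow> nat" where [simp]: "euclidean_size_bit x = (if x = 0 then 0 else 1)"
definition division_segment_bit :: "bit \<Rightarrow> bit" where [simp]: "division_segment_bit x = 1"

instance
  by standard (auto simp: dvd_field_iff)

end

instantiation bit :: euclidean_ring_gcd
begin

definition gcd_bit :: "bit \<Rightarrow> bit \<Rightarrow> bit" where
  "gcd_bit = Euclidean_Algorithm.gcd"
definition lcm_bit :: "bit \<Rightarrow> bit \<Rightarrow> bit" where
  "lcm_bit = Euclidean_Algorithm.lcm"
definition Gcd_bit :: "bit set \<Rightarrow> bit" where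
 "Gcd_bit = Euclidean_Algorithm.Gcd"
definition Lcm_bit :: "bit set \<Rightarrow> bit" where
 "Lcm_bit = Euclidean_Algorithm.Lcm"

instance by standard (simp_all add: gcd_bit_def lcm_bit_def Gcd_bit_def Lcm_bit_def)

end

instance bit :: field_gcd ..


definition vm :: "bit poly \<Rightarrow> bit poly fract \<Rightarrow> int" where
 "vm p x = (SOME k. \<exists>a b. a \<noteq> 0 \<and> b \<noteq> 0 \<and> x = Fract a b \<and> k = int (multiplicity p a) - int (multiplicity p b))"

definition vinf :: "bit poly fract \<Rightarrow> int" where
 "vinf x = (SOME k. \<exists>a b. a \<noteq> 0 \<and> b \<noteq> 0 \<and> x = Fract a b \<and> k = int (degree b) - int (degree a))"

definition isval :: "(bit poly fract \<Rightarrow> int) \<Rightarrow> bool" where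
 "isval v \<longleftrightarrow> (\<forall>x y. x \<noteq> 0 \<longrightarrow> y \<noteq> 0 \<longrightarrow> v (x*y) = v x + v y) \<and>
    (\<forall>x y. x \<noteq> 0 \<longrightarrow> y \<noteq> 0 \<longrightarrow> x + y \<noteq> 0 \<longrightarrow> min (v x) (v y) \<le> v (x + y))"

lemma vm_Fract:
  assumes p: "prime_elem p" and a: "a \<noteq> 0" and b: "b \<noteq> 0"
  shows "vm p (Fract a b) = int (multiplicity p a) - int (multiplicity p b)"
proof -
  have "\<And>a' b'. a' \<noteq> 0 \<Longrightarrow> b' \<noteq> 0 \<Longrightarrow> Fract a b = Fract a' b' \<Longrightarrow>
     int (multiplicity p a') - int (multiplicity p b') = int (multiplicity p a) - int (multiplicity p b)"
  proof -
    fix a' b' :: "bit poly" assume h: "a' \<noteq> 0" "b' \<noteq> 0" "Fract a b = Fract a' b'"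
    then have "a * b' = a' * b" using b by (simp add: eq_fract)
    then have "multiplicity p (a * b') = multiplicity p (a' * b)" by simp
    then show "int (multiplicity p a') - int (multiplicity p b') = int (multiplicity p a) - int (multiplicity p b)"
      using prime_elem_multiplicity_mult_distrib[OF p] a b h by simp
  qed
  note * = this
  show ?thesis unfolding vm_def
    by (rule some_equality) (use a b * in metis)+
qed

lemma vinf_Fract:
  assumes a: "a \<noteq> 0" and b: "b \<noteq> 0"
  shows "vinf (Fract a b) = int (degree b) - int (degree a)"
proof -
  have "\<And>a' b'. a' \<noteq> 0 \<Longrightarrow> b' \<noteq> 0 \<Longrightarrow> Fract a b = Fract a' b' \<Longrightarrow>
     int (degree b') - int (degree a') = int (degree b) - int (degree a)"
  proof -
    fix a' b' :: "bit poly" assume h: "a' \<noteq> 0" "b' \<noteq> 0" "Fract a b = Fract a' b'"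
    then have "a * b' = a' * b" using b by (simp add: eq_fract)
    then have "degree (a * b') = degree (a' * b)" by simp
    then show "int (degree b') - int (degree a') = int (degree b) - int (degree a)"
      using a b h by (simp add: degree_mult_eq)
  qed
  note * = this
  show ?thesis unfolding vinf_def
    by (rule some_equality) (use a b * in metis)+
qed

lemma fract_nz_cases:
  fixes x :: "bit poly fract"
  assumes "x \<noteq> 0"
  obtains a b where "x = Fract a b" "a \<noteq> 0" "b \<noteq> 0"
  using assms by (cases x rule: Fract_cases_nonzero) auto

lemma mult_dvd_sum: 
  fixes p :: "bit poly"
  assumes "p ^ k dvd x" "p ^ k dvd y" "x + y \<noteq> 0" "\<not> is_unit p"
  shows "k \<le> multiplicity p (x + y)"
  using assms by (intro multiplicity_geI) auto

lemma isval_vm: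
  assumes p: "prime_elem p"
  shows "isval (vm p)"
  unfolding isval_def
proof (intro conjI allI impI)
  fix x y :: "bit poly fract" assume x: "x \<noteq> 0" and y: "y \<noteq> 0"
  obtain a b where ab: "x = Fract a b" "a \<noteq> 0" "b \<noteq> 0" using x by (rule fract_nz_cases)
  obtain c d where cd: "y = Fract c d" "c \<noteq> 0" "d \<noteq> 0" using y by (rule fract_nz_cases)
  show "vm p (x * y) = vm p x + vm p y"
    using ab cd by (simp add: vm_Fract[OF p] prime_elem_multiplicity_mult_distrib[OF p])
  assume s: "x + y \<noteq> 0"
  have sxy: "x + y = Fract (a * d + c * b) (b * d)" using ab cd by simp
  have nz: "a * d + c * b \<noteq> 0" using s sxy by (auto simp: fract_collapse)
  have nu: "\<not> is_unit p" using p by (simp add: prime_elem_def)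
  define k where "k = min (multiplicity p a + multiplicity p d) (multiplicity p c + multiplicity p b)"
  have "p ^ k dvd a * d"
    by (rule multiplicity_dvd') (simp add: k_def prime_elem_multiplicity_mult_distrib[OF p] ab cd)
  moreover have "p ^ k dvd c * b"
    by (rule multiplicity_dvd') (simp add: k_def prime_elem_multiplicity_mult_distrib[OF p] ab cd)
  ultimately have "k \<le> multiplicity p (a * d + c * b)" using mult_dvd_sum nz nu by blast
  then show "min (vm p x) (vm p y) \<le> vm p (x + y)"
    using ab cd nz by (simp add: sxy vm_Fract[OF p] prime_elem_multiplicity_mult_distrib[OF p] k_def)
qed

lemma isval_vinf: "isval vinf"
  unfolding isval_def
proof (intro conjI allI impI)
  fix x y :: "bit poly fract" assume x: "x \<noteq> 0" and y: "y \<noteq> 0"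
  obtain a b where ab: "x = Fract a b" "a \<noteq> 0" "b \<noteq> 0" using x by (rule fract_nz_cases)
  obtain c d where cd: "y = Fract c d" "c \<noteq> 0" "d \<noteq> 0" using y by (rule fract_nz_cases)
  show "vinf (x * y) = vinf x + vinf y"
    using ab cd by (simp add: vinf_Fract degree_mult_eq)
  assume s: "x + y \<noteq> 0"
  have sxy: "x + y = Fract (a * d + c * b) (b * d)" using ab cd by simp
  have nz: "a * d + c * b \<noteq> 0" using s sxy by (auto simp: fract_collapse)
  have "degree (a * d + c * b) \<le> max (degree (a * d)) (degree (c * b))" by (rule degree_add_le_max)
  then show "min (vinf x) (vinf y) \<le> vinf (x + y)"
    using ab cd nz by (simp add: sxy vinf_Fract degree_mult_eq)
qed



definition C :: "bit \<Rightarrow> bit poly fract" where "C c = Fract [:c:] 1"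
definition ev :: "bit poly \<Rightarrow> bit poly fract \<Rightarrow> bit poly fract" where
  "ev p x = poly (map_poly C p) x"

lemma C0 [simp]: "C 0 = 0"
  by (simp add: C_def fract_collapse)

lemma C1 [simp]: "C 1 = 1"
proof -
  have "C 1 = Fract 1 1" by (simp add: C_def one_pCons)
  then show ?thesis by (simp only: fract_collapse)
qed

lemma bp2: "(1::bit poly) + 1 = 0"
proof -
  have "(1::bit poly) + 1 = [:1 + 1:]" by (simp add: one_pCons)
  also have "(1::bit) + 1 = 0" by simp
  finally show ?thesis by simp
qed

lemma ev_0 [simp]: "ev 0 x = 0" by (simp add: ev_def)
lemma ev_pCons: "ev (pCons c p) x = C c + x * ev p x"
  unfolding ev_def by (subst map_poly_pCons) simp_all

lemma char2: "(x::bit poly fract) + x = 0"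
proof -
  have "x + x = (1 + 1) * x" by (simp add: algebra_simps)
  also have "(1::bit poly fract) + 1 = Fract 1 1 + Fract 1 1" by (simp only: fract_collapse)
  also have "\<dots> = Fract (1 + 1) 1" by simp
  also have "(1::bit poly) + 1 = 0" by (rule bp2)
  finally show ?thesis by (simp add: fract_collapse)
qed

lemma neg_id: "- (y::bit poly fract) = y"
  by (rule add.inverse_unique[OF char2])

lemma char2': "(x::bit poly fract) + y = 0 \<longleftrightarrow> x = y"
proof
  assume "x + y = 0" then have "- x = y" by (rule add.inverse_unique)
  then show "x = y" by (simp add: neg_id)
next
  assume "x = y" then show "x + y = 0" by (simp add: char2)
qed

context
  fixes v :: "bit poly fract \<Rightarrow> int"
  assumes V: "isval v"
begin

lemma vmult: "x \<noteq> 0 \<Longrightarrow> y \<noteq> 0 \<Longrightarrow> v (x * y) = v x + v y"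
  using V by (simp add: isval_def)

lemma vadd: "x \<noteq> 0 \<Longrightarrow> y \<noteq> 0 \<Longrightarrow> x + y \<noteq> 0 \<Longrightarrow> min (v x) (v y) \<le> v (x + y)"
  using V by (simp add: isval_def)

lemma vone: "v 1 = 0"
  using vmult[of 1 1] by simp

lemma vpow: "x \<noteq> 0 \<Longrightarrow> v (x ^ n) = int n * v x"
  by (induction n) (simp_all add: vone vmult algebra_simps)

lemma vinv: "x \<noteq> 0 \<Longrightarrow> v (inverse x) = - v x"
  using vmult[of x "inverse x"] by (simp add: vone)

lemma vpowi: "x \<noteq> 0 \<Longrightarrow> v (x powi k) = k * v x"
proof (cases "k \<ge> 0")
  case True
  assume "x \<noteq> 0"
  then show ?thesis using True vpow[of x "nat k"] by (metis int_nat_eq power_int_of_nat)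
next
  case False
  assume x: "x \<noteq> 0"
  have "x powi k = inverse (x ^ nat (- k))" using False
    by (metis add.inverse_inverse nat_0_le neg_0_le_iff_le nle_le power_int_minus power_int_of_nat)
  then show ?thesis using x False by (simp add: vinv vpow)
qed

lemma vstrict:
  assumes x: "x \<noteq> 0" and y: "y \<noteq> 0" and lt: "v x < v y"
  shows "x + y \<noteq> 0 \<and> v (x + y) = v x"
proof -
  have s: "x + y \<noteq> 0" using lt char2' by auto
  have "min (v x) (v y) \<le> v (x + y)" by (rule vadd[OF x y s])
  moreover have "x = (x + y) + y" using char2 by (metis add.assoc add_0_right)
  then have "min (v (x + y)) (v y) \<le> v x" using vadd[OF s y] x by metis
  ultimately show ?thesis using s lt by linarith
qed

lemma ev_neg:
  assumes g: "g \<noteq> 0" "v g < 0"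
  shows "p \<noteq> 0 \<Longrightarrow> ev p g \<noteq> 0 \<and> v (ev p g) = int (degree p) * v g"
proof (induction p rule: pCons_induct)
  case 0 then show ?case by simp
next
  case (pCons a p)
  show ?case
  proof (cases "p = 0")
    case True
    then have "a = 1" using pCons by auto
    then show ?thesis using True by (simp add: ev_pCons vone)
  next
    case False
    with pCons.IH have ih: "ev p g \<noteq> 0" "v (ev p g) = int (degree p) * v g" by auto
    have gq: "g * ev p g \<noteq> 0" "v (g * ev p g) = int (Suc (degree p)) * v g"
      using ih g by (simp_all add: vmult algebra_simps)
    show ?thesis
    proof (cases "a = 0")
      case True then show ?thesis using gq False by (simp add: ev_pCons)
    next
      case a: False
      then have "a = 1" by simp
      have "v (g * ev p g) < v 1" using gq(2) g(2) by (simp add: vone mult_pos_neg del: of_nat_Suc)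
      then have "g * ev p g + 1 \<noteq> 0 \<and> v (g * ev p g + 1) = v (g * ev p g)"
        using vstrict[of "g * ev p g" 1] gq by simp
      then have "1 + g * ev p g \<noteq> 0 \<and> v (1 + g * ev p g) = v (g * ev p g)"
        by (simp add: add.commute)
      then show ?thesis using gq False \<open>a = 1\<close> by (simp add: ev_pCons)
    qed
  qed
qed

lemma ev_nonneg:
  assumes g: "g \<noteq> 0" "v g \<ge> 0"
  shows "ev p g = 0 \<or> v (ev p g) \<ge> 0"
proof (induction p rule: pCons_induct)
  case 0 then show ?case by simp
next
  case (pCons a p)
  have gq: "g * ev p g = 0 \<or> v (g * ev p g) \<ge> 0"
    using pCons.IH g by (cases "ev p g = 0") (auto simp: vmult)
  have ca: "C a = 0 \<or> C a = 1" by (cases "a = 0") auto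
  show ?case
  proof (cases "C a = 0")
    case True then show ?thesis using gq by (simp add: ev_pCons)
  next
    case False
    then have a1: "C a = 1" using ca by auto
    show ?thesis
    proof (cases "g * ev p g = 0")
      case True
      have "ev (pCons a p) g = 1" using True a1 by (simp add: ev_pCons)
      then show ?thesis by (simp add: vone)
    next
      case False
      then show ?thesis using vadd[of 1 "g * ev p g"] gq a1 by (auto simp: ev_pCons vone)
    qed
  qed
qed

lemma ev_pos:
  assumes g: "g \<noteq> 0" "v g > 0" and c0: "coeff p 0 = 1"
  shows "ev p g \<noteq> 0 \<and> v (ev p g) = 0"
proof -
  obtain q where p: "p = pCons 1 q" using c0 by (metis pCons_cases coeff_pCons_0)
  have "ev p g = 1 + g * ev q g" using p by (simp add: ev_pCons)
  show ?thesis
  proof (cases "ev q g = 0")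
    case True then show ?thesis using p by (simp add: ev_pCons vone)
  next
    case False
    then have "0 \<le> v (ev q g)" using ev_nonneg[of g q] g by auto
    then have lt: "v 1 < v (g * ev q g)" using g False by (simp add: vmult vone)
    have s: "g * ev q g \<noteq> 0" using g False by simp
    have "1 + g * ev q g \<noteq> 0 \<and> v (1 + g * ev q g) = v 1"
      using vstrict[OF _ s lt] by simp
    then show ?thesis using \<open>ev p g = 1 + g * ev q g\<close> by (simp add: vone)
  qed
qed

end


abbreviation tt :: "bit poly" where "tt \<equiv> [:0, 1:]"
abbreviation P :: "bit poly \<Rightarrow> bit poly fract" where "P p \<equiv> Fract p 1"

lemma P_mult: "P p * P q = P (p * q)" by simp
lemma P_pow: "P p ^ n = P (p ^ n)"
  by (induction n) (simp_all add: fract_collapse)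
lemma P_inj: "P p = P q \<longleftrightarrow> p = q" by (simp add: eq_fract)
lemma P_eq0: "P p = 0 \<longleftrightarrow> p = 0"
proof -
  have "P p = 0 \<longleftrightarrow> P p = Fract 0 1" by (simp only: fract_collapse(1))
  also have "\<dots> \<longleftrightarrow> p * 1 = 0 * 1" by (rule eq_fract(1)) simp_all
  finally show ?thesis by simp
qed
lemma P_one: "P 1 = 1" by (simp add: fract_collapse)
lemma Fract_as_div: "s \<noteq> 0 \<Longrightarrow> Fract p s = P p * inverse (P s)" by simp

lemma C_P: "C c = P [:c:]" by (simp add: C_def)

lemma pCons_tt: "pCons c p = [:c:] + tt * p"
  by (simp add: mult_pCons_left)

lemma ev_T: "ev p (P tt) = P p"
proof (induction p)
  case 0 then show ?case by (simp add: fract_collapse)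
next
  case (pCons a p)
  have "P (pCons a p) = P ([:a:] + tt * p)" by (metis pCons_tt)
  also have "\<dots> = P [:a:] + P tt * P p" by simp
  finally have "P (pCons a p) = P [:a:] + P tt * P p" .
  then show ?case using pCons by (simp add: ev_pCons C_P)
qed

lemma bit_poly_unit: "is_unit (p :: bit poly) \<longleftrightarrow> p = 1"
proof
  assume "is_unit p"
  then obtain c where "p = [:c:]" "is_unit c" by (auto simp: is_unit_poly_iff)
  moreover have "c \<noteq> 0" using \<open>is_unit c\<close> by auto
  ultimately show "p = 1" by (simp add: pCons_one)
qed simp

lemma bit_poly_normalize: "normalize (p :: bit poly) = p"
proof (cases "p = 0")
  case False
  have "lead_coeff p \<noteq> 0" using False by simp
  then have "lead_coeff p = 1" using bit_not_zero_iff by blast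
  then have "unit_factor p = 1" by (simp add: unit_factor_poly_def pCons_one)
  then show ?thesis using normalize_mult_unit_factor[of p] by simp
qed simp

lemma tt_prime: "prime_elem tt" by (rule prime_elem_linear_field_poly) simp
lemma tt_nunit: "\<not> is_unit tt" by (simp add: is_unit_iff_degree)

lemma R_Fract: "Fract p (tt ^ a * f ^ b) \<in> R_f f"
  unfolding R_f_def by blast

lemma R_P: "P p \<in> R_f f"
  using R_Fract[of p 0 f 0] by simp

lemma R_add:
  assumes f: "f \<noteq> 0" and x: "x \<in> R_f f" and y: "y \<in> R_f f"
  shows "x + y \<in> R_f f" "x * y \<in> R_f f"
proof -
  obtain p a b where xe: "x = Fract p (tt ^ a * f ^ b)" using x unfolding R_f_def by blast
  obtain q c d where ye: "y = Fract q (tt ^ c * f ^ d)" using y unfolding R_f_def by blast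
  have nz: "tt ^ a * f ^ b \<noteq> 0" "tt ^ c * f ^ d \<noteq> 0" using f by auto
  have e: "(tt ^ a * f ^ b) * (tt ^ c * f ^ d) = tt ^ (a + c) * f ^ (b + d)"
    by (simp add: power_add algebra_simps)
  have "x + y = Fract (p * (tt ^ c * f ^ d) + q * (tt ^ a * f ^ b)) (tt ^ (a + c) * f ^ (b + d))"
    using nz by (simp add: xe ye e)
  then show "x + y \<in> R_f f" by (simp add: R_Fract)
  have "x * y = Fract (p * q) (tt ^ (a + c) * f ^ (b + d))"
    by (simp add: xe ye e)
  then show "x * y \<in> R_f f" by (simp add: R_Fract)
qed

lemma R_inv_unit: "inverse (P (tt ^ a * f ^ b)) \<in> R_f f"
  using R_Fract[of 1 a f b] by simp

lemma R_0: "0 \<in> R_f f" and R_1: "1 \<in> R_f f"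
  using R_P[of 0 f] R_P[of 1 f] by (simp_all add: fract_collapse)

lemma reflect_map: "map_poly C (reflect_poly p) = reflect_poly (map_poly C p)"
proof (rule poly_eqI)
  fix n
  have Cnz: "\<And>x. x \<noteq> 0 \<Longrightarrow> C x \<noteq> 0" by simp
  show "coeff (map_poly C (reflect_poly p)) n = coeff (reflect_poly (map_poly C p)) n"
    by (simp add: coeff_map_poly coeff_reflect_poly degree_map_poly[OF Cnz])
qed

lemma ev_reflect: "x \<noteq> 0 \<Longrightarrow> ev (reflect_poly p) x = x ^ degree p * ev p (inverse x)"
proof -
  assume x: "x \<noteq> 0"
  have Cnz: "\<And>x. x \<noteq> 0 \<Longrightarrow> C x \<noteq> 0" by simp
  show ?thesis unfolding ev_def reflect_map
    using poly_reflect_poly_nz[OF x, of "map_poly C p"] by (simp add: degree_map_poly[OF Cnz])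
qed



definition U :: "bit poly \<Rightarrow> int \<Rightarrow> int \<Rightarrow> bit poly fract" where
  "U f \<alpha> \<beta> = P tt powi \<alpha> * P f powi \<beta>"

lemma irr_eq:
  fixes q r :: "bit poly"
  assumes "irreducible q" "r dvd q" "\<not> is_unit r"
  shows "q = r"
proof -
  obtain s where "q = r * s" using assms(2) by (auto elim: dvdE)
  then have "is_unit r \<or> is_unit s" using irreducibleD[OF assms(1)] by blast
  then have "s = 1" using assms(3) by (simp add: bit_poly_unit)
  then show ?thesis using \<open>q = r * s\<close> by simp
qed

lemma tt_irr: "irreducible tt" by (rule irreducible_linear_field_poly) simp

lemma P_tt_nz: "P tt \<noteq> 0" by (simp add: P_eq0)

context
  fixes f :: "bit poly"
  assumes irr: "irreducible f" and ft: "f \<noteq> tt" and nsr: "\<not> self_reciprocal f"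
begin

lemma f0: "f \<noteq> 0" using irr by auto
lemma P_f_nz: "P f \<noteq> 0" using f0 by (simp add: P_eq0)
lemma f_prime: "prime_elem f" using irr by (rule irreducible_imp_prime_elem)
lemma f_nunit: "\<not> is_unit f" using irr by (rule irreducible_not_unit)

lemma f_coeff0: "coeff f 0 = 1"
proof (rule ccontr)
  assume "coeff f 0 \<noteq> 1"
  then have c: "coeff f 0 = 0" by simp
  obtain a q where fq: "f = pCons a q" by (cases f)
  then have "a = 0" using c by simp
  then have "f = tt * q" using fq by simp
  then have "is_unit tt \<or> is_unit q" using irreducibleD[OF irr] by blast
  then have "q = 1" using tt_nunit by (simp add: bit_poly_unit)
  then show False using \<open>f = tt * q\<close> ft by simp
qed

lemma f_lead: "lead_coeff f = 1"
proof -
  have "lead_coeff f \<noteq> 0" using f0 by simp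
  then show ?thesis using bit_not_zero_iff by blast
qed

lemma f_deg: "degree f \<ge> 2"
proof -
  have "degree f \<noteq> 0" using f_nunit f0 by (simp add: is_unit_iff_degree)
  moreover have "degree f \<noteq> 1"
  proof
    assume d: "degree f = 1"
    have "f = [:1, 1:]"
    proof (rule poly_eqI)
      fix n show "coeff f n = coeff [:1, 1:] n"
      proof (cases n)
        case 0 then show ?thesis using f_coeff0 by simp
      next
        case (Suc m)
        show ?thesis
        proof (cases m)
          case 0 then show ?thesis using f_lead d Suc by simp
        next
          case (Suc k) then show ?thesis using d \<open>n = Suc m\<close> by (simp add: coeff_eq_0)
        qed
      qed
    qed
    moreover have "reflect_poly [:1, 1:] = ([:1, 1:] :: bit poly)"
      by (simp add: reflect_poly_def)
    ultimately show False using nsr by (simp add: self_reciprocal_def)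
  qed
  ultimately show ?thesis by linarith
qed

lemma tt_ndvd_f: "\<not> tt dvd f"
proof
  assume "tt dvd f"
  then have "poly f 0 = 0" using dvd_iff_poly_eq_0[of 0 f] by simp
  then show False using f_coeff0 by (simp add: poly_0_coeff_0)
qed

lemma f_ndvd_tt: "\<not> f dvd tt"
proof
  assume "f dvd tt"
  then have "degree f \<le> degree tt" by (rule dvd_imp_degree_le) simp
  then show False using f_deg by simp
qed

lemma vm_tt_T: "vm tt (P tt) = 1"
  by (simp add: vm_Fract[OF tt_prime] multiplicity_self tt_nunit)
lemma vm_tt_F: "vm tt (P f) = 0"
  using f0 by (simp add: vm_Fract[OF tt_prime] not_dvd_imp_multiplicity_0 tt_ndvd_f)
lemma vm_f_T: "vm f (P tt) = 0"
  by (simp add: vm_Fract[OF f_prime] not_dvd_imp_multiplicity_0 f_ndvd_tt)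
lemma vm_f_F: "vm f (P f) = 1"
  using f0 by (simp add: vm_Fract[OF f_prime] multiplicity_self f_nunit)
lemma vinf_T: "vinf (P tt) = -1"
  by (simp add: vinf_Fract)
lemma vinf_F: "vinf (P f) = - int (degree f)"
  using f0 by (simp add: vinf_Fract)

lemma U_nz: "U f \<alpha> \<beta> \<noteq> 0"
  using P_tt_nz P_f_nz by (simp add: U_def)

lemma vU: "isval v \<Longrightarrow> v (U f \<alpha> \<beta>) = \<alpha> * v (P tt) + \<beta> * v (P f)"
  unfolding U_def using P_tt_nz P_f_nz by (simp add: vmult vpowi)

lemma U_inj: "U f \<alpha> \<beta> = U f \<gamma> \<delta> \<Longrightarrow> \<alpha> = \<gamma> \<and> \<beta> = \<delta>"
proof -
  assume e: "U f \<alpha> \<beta> = U f \<gamma> \<delta>"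
  have "vm tt (U f \<alpha> \<beta>) = vm tt (U f \<gamma> \<delta>)" "vm f (U f \<alpha> \<beta>) = vm f (U f \<gamma> \<delta>)" using e by simp_all
  then show ?thesis
    by (simp add: vU[OF isval_vm[OF tt_prime]] vU[OF isval_vm[OF f_prime]] vm_tt_T vm_tt_F vm_f_T vm_f_F)
qed

lemma U_mult: "U f \<alpha> \<beta> * U f \<gamma> \<delta> = U f (\<alpha> + \<gamma>) (\<beta> + \<delta>)"
  unfolding U_def using P_tt_nz P_f_nz by (simp add: power_int_add algebra_simps)

lemma U_powi: "U f \<alpha> \<beta> powi k = U f (\<alpha> * k) (\<beta> * k)"
  unfolding U_def by (simp add: power_int_mult_distrib power_int_mult)

lemma U_10: "U f 1 0 = P tt" by (simp add: U_def)
lemma U_01: "U f 0 1 = P f" by (simp add: U_def)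

lemma unit_form:
  assumes x: "x \<in> R_f f" and y: "y \<in> R_f f" and xy: "x * y = 1"
  shows "\<exists>\<alpha> \<beta>. x = U f \<alpha> \<beta>"
proof -
  obtain p a b where xe: "x = Fract p (tt ^ a * f ^ b)" using x unfolding R_f_def by blast
  obtain q c d where ye: "y = Fract q (tt ^ c * f ^ d)" using y unfolding R_f_def by blast
  have nz: "tt ^ a * f ^ b \<noteq> 0" "tt ^ c * f ^ d \<noteq> 0" using f0 by auto
  have "Fract (p * q) ((tt ^ a * f ^ b) * (tt ^ c * f ^ d)) = Fract 1 1"
    using xy by (simp add: xe ye fract_collapse)
  then have pq: "p * q = (tt ^ a * f ^ b) * (tt ^ c * f ^ d)"
    using nz by (simp add: eq_fract)
  then have p0: "p \<noteq> 0" using nz by auto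
  obtain p1 where p1: "p = tt ^ multiplicity tt p * p1" "\<not> tt dvd p1"
    by (rule multiplicity_decompose'[OF p0 tt_nunit])
  have "p1 \<noteq> 0" using p0 p1 by auto
  obtain p2 where p2: "p1 = f ^ multiplicity f p1 * p2" "\<not> f dvd p2"
    by (rule multiplicity_decompose'[OF \<open>p1 \<noteq> 0\<close> f_nunit])
  have "is_unit p2"
  proof (rule ccontr)
    assume nu: "\<not> is_unit p2"
    have "p2 \<noteq> 0" using p0 p1 p2 by auto
    then obtain r where r: "r dvd p2" "prime r" using prime_divisor_exists nu by blast
    have "p2 dvd p1" using p2(1) dvd_triv_right by metis
    moreover have "p1 dvd p" using p1(1) dvd_triv_right by metis
    ultimately have "p2 dvd p" by (rule dvd_trans)
    then have "r dvd (tt ^ a * f ^ b) * (tt ^ c * f ^ d)" using r pq by (metis dvd_mult2 dvd_trans)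
    then have "r dvd tt ^ a \<or> r dvd f ^ b \<or> r dvd tt ^ c \<or> r dvd f ^ d"
      using r(2) by (simp add: prime_dvd_mult_iff)
    then have "r dvd tt \<or> r dvd f" using r(2) prime_dvd_power by blast
    moreover have "\<not> is_unit r" using r(2) by (simp add: prime_def prime_elem_def)
    ultimately have "r = tt \<or> r = f" using irr_eq[OF tt_irr] irr_eq[OF irr] by metis
    then show False
    proof
      assume "r = tt"
      then have "tt dvd p1" using r(1) p2 by (metis dvd_mult dvd_trans dvd_refl)
      then show False using p1 by simp
    next
      assume "r = f" then show False using r(1) p2 by simp
    qed
  qed
  then have "p2 = 1" by (simp add: bit_poly_unit)
  define i where "i = multiplicity tt p"
  define j where "j = multiplicity f p1"
  have pe: "p = tt ^ i * f ^ j" using p1 p2 \<open>p2 = 1\<close> by (simp add: i_def j_def)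
  have "x = P (tt ^ i * f ^ j) / P (tt ^ a * f ^ b)" using nz by (simp add: xe pe)
  also have "\<dots> = (P tt ^ i * P f ^ j) / (P tt ^ a * P f ^ b)" by (simp add: P_pow)
  also have "\<dots> = U f (int i - int a) (int j - int b)"
    unfolding U_def using P_tt_nz P_f_nz by (simp add: power_int_diff)
  finally show ?thesis by blast
qed

end

lemma unit_prod:
  fixes x y :: int
  assumes "x * y = 1 \<or> x * y = -1"
  shows "\<bar>x\<bar> = 1 \<and> \<bar>y\<bar> = 1"
proof -
  have "\<bar>x\<bar> * \<bar>y\<bar> = 1" using assms by (auto simp flip: abs_mult)
  then have "\<bar>x\<bar> = 1 \<and> \<bar>y\<bar> = 1 \<or> \<bar>x\<bar> = - 1 \<and> \<bar>y\<bar> = - 1" by (simp add: zmult_eq_1_iff)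
  then show ?thesis by linarith
qed

lemma int_cases:
  fixes a b c d n :: int
  assumes n: "n \<ge> 2"
  and D: "a*d - b*c = 1 \<or> a*d - b*c = -1"
  and V0: "a > 0 \<longrightarrow> c = 0" "a < 0 \<longrightarrow> c = n * a" "a = 0 \<longrightarrow> c \<ge> 0"
  and Vf: "b > 0 \<longrightarrow> d = 0" "b < 0 \<longrightarrow> d = n * b" "b = 0 \<longrightarrow> d \<ge> 0"
  and Vi: "-a-n*b > 0 \<longrightarrow> -c-n*d = 0" "-a-n*b < 0 \<longrightarrow> -c-n*d = n*(-a-n*b)"
  shows "(a = 1 \<and> b = 0) \<or> (a = -1 \<and> b = 0 \<and> c = -n \<and> d = 1)"
proof -
  consider "b < 0" | "b = 0" | "b > 0" by linarith
  then show ?thesis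
  proof cases
    case 1
    then have d: "d = n * b" using Vf by auto
    consider "a < 0" | "a = 0" | "a > 0" by linarith
    then show ?thesis
    proof cases
      case 1
      then have "c = n * a" using V0 by auto
      then have "a*d - b*c = 0" using d by (simp add: algebra_simps)
      then show ?thesis using D by simp
    next
      case 2
      then have c: "c \<ge> 0" using V0 by auto
      have "b * c = 1 \<or> b * c = -1" using D 2 by auto
      then have "b = -1 \<and> c = 1" using c \<open>b < 0\<close> unit_prod[of b c] by (simp add: abs_if split: if_splits)
      then have "-a-n*b > 0" using 2 n by simp
      then have "-c-n*d = 0" using Vi by auto
      then have "n * n = 1" using d \<open>b = -1 \<and> c = 1\<close> by (simp add: algebra_simps)
      moreover have "n * n \<ge> 2 * 2" using n by (intro mult_mono) auto
      ultimately show ?thesis by simp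
    next
      case 3
      then have "c = 0" using V0 by auto
      then have "a * (n * b) = 1 \<or> a * (n * b) = -1" using D d by simp
      moreover have "n * (-b) \<ge> 2 * 1" using n 1 by (intro mult_mono) auto
      moreover have "a * (n * (-b)) \<ge> 1 * (n * (-b))" using 3 1 n by (intro mult_mono) (auto simp: mult_nonneg_nonpos)
      ultimately show ?thesis by (simp add: algebra_simps; linarith)
    qed
  next
    case 2
    then have "a * d = 1 \<or> a * d = -1" using D by simp
    moreover have "d \<ge> 0" using Vf 2 by auto
    ultimately have ad: "(a = 1 \<and> d = 1) \<or> (a = -1 \<and> d = 1)"
      using unit_prod[of a d] by (simp add: abs_if split: if_splits)
    then show ?thesis
    proof
      assume "a = 1 \<and> d = 1" then show ?thesis using 2 by simp
    next
      assume "a = -1 \<and> d = 1" then show ?thesis using 2 V0 by simp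
    qed
  next
    case 3
    then have d: "d = 0" using Vf by auto
    then have bc: "b * c = 1 \<or> b * c = -1" using D by auto
    then have b1: "b = 1" using 3
      using unit_prod[of b c] by (simp add: abs_if split: if_splits)
    then have c1: "c = 1 \<or> c = -1" using bc by simp
    consider "a < 0" | "a = 0" | "a > 0" by linarith
    then show ?thesis
    proof cases
      case 1
      then have "c = n * a" using V0 by auto
      moreover have "n * (-a) \<ge> 2 * 1" using n 1 by (intro mult_mono) auto
      ultimately show ?thesis using c1 by (simp add: algebra_simps; linarith)
    next
      case 2
      then have "c = 1" using V0 c1 by auto
      have "-a-n*b < 0" using 2 b1 n by simp
      then have "-c-n*d = n*(-a-n*b)" using Vi by auto
      then have "n * n = 1" using d \<open>c = 1\<close> b1 2 by (simp add: algebra_simps)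
      moreover have "n * n \<ge> 2 * 2" using n by (intro mult_mono) auto
      ultimately show ?thesis by simp
    next
      case 3
      then show ?thesis using V0 c1 by auto
    qed
  qed
qed

context
  fixes f :: "bit poly"
  assumes irr: "irreducible f" and ft: "f \<noteq> tt" and nsr: "\<not> self_reciprocal f"
begin

lemma val_constraints:
  assumes v: "isval v" and g: "g \<noteq> 0" and h: "h = ev f g" "h \<noteq> 0"
  shows "(v g > 0 \<longrightarrow> v h = 0) \<and> (v g < 0 \<longrightarrow> v h = int (degree f) * v g) \<and> (v g = 0 \<longrightarrow> v h \<ge> 0)"
proof (intro conjI impI)
  assume "v g > 0" then show "v h = 0" using ev_pos[OF v g _ f_coeff0[OF irr ft nsr]] h by simp
next
  assume "v g < 0" then show "v h = int (degree f) * v g" using ev_neg[OF v g _ f0[OF irr ft nsr]] h by simp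
next
  assume "v g = 0" then show "v h \<ge> 0" using ev_nonneg[OF v g, of f] h by simp
qed

context
  fixes \<phi> :: "bit poly fract \<Rightarrow> bit poly fract"
  assumes aut: "ring_automorphism (R_f f) \<phi>"
begin

lemma fnz: "f \<noteq> 0" by (rule f0[OF irr ft nsr])

lemma ph_add: "x \<in> R_f f \<Longrightarrow> y \<in> R_f f \<Longrightarrow> \<phi> (x + y) = \<phi> x + \<phi> y"
  using aut by (simp add: ring_automorphism_def)
lemma ph_mult: "x \<in> R_f f \<Longrightarrow> y \<in> R_f f \<Longrightarrow> \<phi> (x * y) = \<phi> x * \<phi> y"
  using aut by (simp add: ring_automorphism_def)
lemma ph_1: "\<phi> 1 = 1"
  using aut by (simp add: ring_automorphism_def)
lemma ph_bij: "bij_betw \<phi> (R_f f) (R_f f)"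
  using aut by (simp add: ring_automorphism_def)
lemma ph_inj: "inj_on \<phi> (R_f f)" using ph_bij by (rule bij_betw_imp_inj_on)
lemma ph_img: "\<phi> ` R_f f = R_f f" using ph_bij by (rule bij_betw_imp_surj_on)
lemma ph_R: "x \<in> R_f f \<Longrightarrow> \<phi> x \<in> R_f f" using ph_img by blast
lemma ph_surj: "y \<in> R_f f \<Longrightarrow> \<exists>x\<in>R_f f. \<phi> x = y" using ph_img by (metis imageE)

lemma ph_0: "\<phi> 0 = 0"
proof -
  have "\<phi> (0 + 0) = \<phi> 0 + \<phi> 0" using R_0 by (rule ph_add) (rule R_0)
  then show ?thesis by (simp add: char2)
qed

lemma ph_C: "\<phi> (P [:c:]) = C c"
proof (cases "c = 0")
  case True then show ?thesis using ph_0 by (simp add: fract_collapse)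
next
  case False then have "c = 1" by simp
  then show ?thesis using ph_1 by (simp add: pCons_one fract_collapse)
qed

lemma ph_P: "\<phi> (P p) = ev p (\<phi> (P tt))"
proof (induction p)
  case 0 then show ?case using ph_0 by (simp add: fract_collapse)
next
  case (pCons a p)
  have "P (pCons a p) = P ([:a:] + tt * p)" by (metis pCons_tt)
  also have "\<dots> = P [:a:] + P tt * P p" by simp
  finally have e: "P (pCons a p) = P [:a:] + P tt * P p" .
  have "\<phi> (P (pCons a p)) = \<phi> (P [:a:] + P tt * P p)" by (simp only: e)
  also have "\<dots> = \<phi> (P [:a:]) + \<phi> (P tt * P p)"
    by (rule ph_add) (simp_all add: R_P R_add fnz)
  also have "\<phi> (P tt * P p) = \<phi> (P tt) * \<phi> (P p)"
    by (rule ph_mult) (simp_all add: R_P)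
  finally have "\<phi> (P (pCons a p)) = \<phi> (P [:a:]) + \<phi> (P tt) * \<phi> (P p)" .
  then show ?case using pCons by (simp add: ph_C ev_pCons)
qed

lemma R_pow: "x \<in> R_f f \<Longrightarrow> x ^ n \<in> R_f f"
  by (induction n) (simp_all add: R_1 R_add fnz)

lemma ph_pow: "x \<in> R_f f \<Longrightarrow> \<phi> (x ^ n) = \<phi> x ^ n"
  by (induction n) (simp_all add: ph_1 ph_mult R_pow)

lemma ph_inv: "x \<in> R_f f \<Longrightarrow> inverse x \<in> R_f f \<Longrightarrow> x \<noteq> 0 \<Longrightarrow> \<phi> (inverse x) = inverse (\<phi> x)"
proof -
  assume x: "x \<in> R_f f" "inverse x \<in> R_f f" "x \<noteq> 0"
  have "\<phi> (x * inverse x) = \<phi> x * \<phi> (inverse x)" by (rule ph_mult) (use x in auto)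
  then have "\<phi> x * \<phi> (inverse x) = \<phi> (x * inverse x)" by simp
  also have "\<dots> = 1" using x ph_1 by simp
  finally show ?thesis by (metis inverse_unique)
qed

lemma ph_powi:
  assumes x: "x \<in> R_f f" "inverse x \<in> R_f f" "x \<noteq> 0"
  shows "x powi k \<in> R_f f \<and> \<phi> (x powi k) = \<phi> x powi k"
  using x by (simp add: power_int_def R_pow ph_pow ph_inv)

lemma T_R: "P tt \<in> R_f f" by (rule R_P)
lemma Ti_R: "inverse (P tt) \<in> R_f f" using R_inv_unit[of 1 f 0] by simp
lemma F_R: "P f \<in> R_f f" by (rule R_P)
lemma Fi_R: "inverse (P f) \<in> R_f f" using R_inv_unit[of 0 f 1] by simp

lemma U_R: "U f \<alpha> \<beta> \<in> R_f f"
  unfolding U_def using ph_powi[OF T_R Ti_R P_tt_nz] ph_powi[OF F_R Fi_R P_f_nz[OF irr ft nsr]]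
  by (simp add: R_add fnz)

lemma ph_U: "\<phi> (U f \<alpha> \<beta>) = \<phi> (P tt) powi \<alpha> * \<phi> (P f) powi \<beta>"
  unfolding U_def using ph_powi[OF T_R Ti_R P_tt_nz] ph_powi[OF F_R Fi_R P_f_nz[OF irr ft nsr]]
  by (simp add: ph_mult)

lemma ph_unit:
  assumes x: "x \<in> R_f f" "inverse x \<in> R_f f" "x \<noteq> 0"
  shows "\<exists>a b. \<phi> x = U f a b"
proof -
  have "\<phi> (x * inverse x) = \<phi> x * \<phi> (inverse x)" by (rule ph_mult) (use x in auto)
  then have "\<phi> x * \<phi> (inverse x) = 1" using x ph_1 by simp
  then show ?thesis using unit_form[OF irr ft nsr] ph_R x by blast
qed

lemma preimage:
  assumes g: "\<phi> (P tt) = U f a b" and h: "\<phi> (P f) = U f c d"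
    and z: "z \<in> R_f f" "inverse z \<in> R_f f" "z \<noteq> 0"
  shows "\<exists>\<alpha> \<beta>. z = U f (a * \<alpha> + c * \<beta>) (b * \<alpha> + d * \<beta>)"
proof -
  obtain x where x: "x \<in> R_f f" "\<phi> x = z" using ph_surj z by blast
  obtain y where y: "y \<in> R_f f" "\<phi> y = inverse z" using ph_surj z by blast
  have "\<phi> (x * y) = \<phi> 1" using x y z ph_1 by (simp add: ph_mult)
  then have "x * y = 1" using ph_inj x y R_1 R_add fnz by (meson inj_onD)
  then obtain \<alpha> \<beta> where "x = U f \<alpha> \<beta>" using unit_form[OF irr ft nsr] x y by blast
  then have "z = U f a b powi \<alpha> * U f c d powi \<beta>" using x g h by (simp add: ph_U)
  then have "z = U f (a * \<alpha> + c * \<beta>) (b * \<alpha> + d * \<beta>)"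
    by (simp add: U_powi[OF irr ft nsr] U_mult[OF irr ft nsr] algebra_simps)
  then show ?thesis by blast
qed

end
end


theorem mainTheorem13:
  fixes f :: "bit poly" and \<phi> :: "bit poly fract \<Rightarrow> bit poly fract"
  assumes "irreducible f" and "f \<noteq> [:0, 1:]" and "\<not> self_reciprocal f"
    and "ring_automorphism (R_f f) \<phi>"
  shows "\<forall>x\<in>R_f f. \<phi> x = x"
proof -
  note I = assms(1-3)
  note A = assms
  have T: "P tt \<in> R_f f" by (rule R_P)
  have Ti: "inverse (P tt) \<in> R_f f" using R_inv_unit[of 1 f 0] by simp
  have F: "P f \<in> R_f f" by (rule R_P)
  have Fi: "inverse (P f) \<in> R_f f" using R_inv_unit[of 0 f 1] by simp
  have fnz: "f \<noteq> 0" using assms(1) by auto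
  have Pf: "P f \<noteq> 0" using fnz by (simp add: P_eq0)
  obtain a b where g: "\<phi> (P tt) = U f a b" using ph_unit[OF A T Ti P_tt_nz] by blast
  obtain c d where h: "\<phi> (P f) = U f c d" using ph_unit[OF A F Fi Pf] by blast
  have hev: "U f c d = ev f (U f a b)" using ph_P[OF A, of f] g h by simp
  obtain \<alpha> \<beta> where e1: "P tt = U f (a*\<alpha> + c*\<beta>) (b*\<alpha> + d*\<beta>)"
    using preimage[OF A g h T Ti P_tt_nz] by blast
  obtain \<gamma> \<delta> where e2: "P f = U f (a*\<gamma> + c*\<delta>) (b*\<gamma> + d*\<delta>)"
    using preimage[OF A g h F Fi Pf] by blast
  have u10: "U f 1 0 = P tt" and u01: "U f 0 1 = P f" by (simp_all add: U_def)
  have s1: "a*\<alpha> + c*\<beta> = 1 \<and> b*\<alpha> + d*\<beta> = 0" using U_inj[OF I] e1 u10 by metis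
  have s2: "a*\<gamma> + c*\<delta> = 0 \<and> b*\<gamma> + d*\<delta> = 1" using U_inj[OF I] e2 u01 by metis
  have "(a*d - b*c)*(\<alpha>*\<delta> - \<gamma>*\<beta>) = (a*\<alpha>+c*\<beta>)*(b*\<gamma>+d*\<delta>) - (a*\<gamma>+c*\<delta>)*(b*\<alpha>+d*\<beta>)"
    by (simp add: algebra_simps)
  then have "(a*d - b*c)*(\<alpha>*\<delta> - \<gamma>*\<beta>) = 1" using s1 s2 by simp
  then have D: "a*d - b*c = 1 \<or> a*d - b*c = -1" using unit_prod[of "a*d - b*c" "\<alpha>*\<delta> - \<gamma>*\<beta>"] by auto
  define n where "n = int (degree f)"
  have n2: "n \<ge> 2" using f_deg[OF I] by (simp add: n_def)
  have gnz: "U f a b \<noteq> 0" and hnz: "U f c d \<noteq> 0" using U_nz[OF I] by auto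
  have vt: "vm tt (U f \<alpha>' \<beta>') = \<alpha>'" for \<alpha>' \<beta>'
    by (simp add: vU[OF I isval_vm[OF tt_prime]] vm_tt_T[OF I] vm_tt_F[OF I])
  have vf: "vm f (U f \<alpha>' \<beta>') = \<beta>'" for \<alpha>' \<beta>'
    by (simp add: vU[OF I isval_vm[OF f_prime[OF I]]] vm_f_T[OF I] vm_f_F[OF I])
  have vi: "vinf (U f \<alpha>' \<beta>') = - \<alpha>' - n * \<beta>'" for \<alpha>' \<beta>'
    by (simp add: vU[OF I isval_vinf] vinf_T[OF I] vinf_F[OF I] n_def)
  have V0: "(a > 0 \<longrightarrow> c = 0) \<and> (a < 0 \<longrightarrow> c = n * a) \<and> (a = 0 \<longrightarrow> c \<ge> 0)"
    using val_constraints[OF I isval_vm[OF tt_prime] gnz hev hnz] by (simp add: vt n_def)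
  have Vf: "(b > 0 \<longrightarrow> d = 0) \<and> (b < 0 \<longrightarrow> d = n * b) \<and> (b = 0 \<longrightarrow> d \<ge> 0)"
    using val_constraints[OF I isval_vm[OF f_prime[OF I]] gnz hev hnz] by (simp add: vf n_def)
  have Vi: "(-a-n*b > 0 \<longrightarrow> -c-n*d = 0) \<and> (-a-n*b < 0 \<longrightarrow> -c-n*d = n*(-a-n*b))"
    using val_constraints[OF I isval_vinf gnz hev hnz] by (simp add: vi n_def)
  have cases: "(a = 1 \<and> b = 0) \<or> (a = -1 \<and> b = 0 \<and> c = -n \<and> d = 1)"
    using int_cases[OF n2 D] V0 Vf Vi by blast
  have a1: "a = 1 \<and> b = 0"
  proof (rule ccontr)
    assume "\<not> (a = 1 \<and> b = 0)"
    then have abcd: "a = -1" "b = 0" "c = -n" "d = 1" using cases by auto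
    have "U f a b = inverse (P tt)" using abcd by (simp add: U_def power_int_minus)
    moreover have "U f c d = inverse (P tt ^ degree f) * P f"
      using abcd by (simp add: U_def power_int_minus n_def)
    ultimately have he: "inverse (P tt ^ degree f) * P f = ev f (inverse (P tt))" using hev by simp
    have "P (reflect_poly f) = ev (reflect_poly f) (P tt)" by (simp add: ev_T)
    also have "\<dots> = P tt ^ degree f * ev f (inverse (P tt))" by (rule ev_reflect[OF P_tt_nz])
    also have "\<dots> = P tt ^ degree f * (inverse (P tt ^ degree f) * P f)" by (simp only: he)
    also have "\<dots> = P f"
    proof -
      have nz: "P tt ^ degree f \<noteq> 0" using P_tt_nz by simp
      show ?thesis by (simp only: mult.assoc[symmetric] right_inverse[OF nz] mult_1_left)
    qed
    finally have "reflect_poly f = f" by (simp add: P_inj)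
    then show False using assms(3) by (simp add: self_reciprocal_def)
  qed
  then have gT: "\<phi> (P tt) = P tt" using g u10 by simp
  show ?thesis
  proof
    fix x assume x: "x \<in> R_f f"
    then obtain p k l where xe: "x = Fract p (tt ^ k * f ^ l)" unfolding R_f_def by blast
    define s where "s = tt ^ k * f ^ l"
    have snz: "s \<noteq> 0" using fnz by (simp add: s_def)
    have Ps: "P s \<noteq> 0" using snz by (simp add: P_eq0)
    have Psi: "inverse (P s) \<in> R_f f" using R_inv_unit[of k f l] by (simp add: s_def)
    have xd: "x = P p * inverse (P s)" using snz by (simp add: xe s_def)
    have "\<phi> (P p * inverse (P s)) = \<phi> (P p) * \<phi> (inverse (P s))" by (rule ph_mult[OF A R_P Psi])
    then have "\<phi> x = \<phi> (P p) * \<phi> (inverse (P s))" by (simp only: xd)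
    also have "\<phi> (inverse (P s)) = inverse (\<phi> (P s))" by (rule ph_inv[OF A R_P Psi Ps])
    also have "\<phi> (P s) = P s" using ph_P[OF A, of s] gT by (simp add: ev_T)
    also have "\<phi> (P p) = P p" using ph_P[OF A, of p] gT by (simp add: ev_T)
    finally have fx: "\<phi> x = P p * inverse (P s)" .
    show "\<phi> x = x" by (rule trans[OF fx xd[symmetric]])
  qed
qed


end
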